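(* Let $p\ge q$ and $n\ge 1$ be positive integers and let $B$ be a $p\times q$ matrix. Let $C$ be the $(nq+p)\times(nq+p)$ block matrix $$C=\begin{bmatrix} 0 & B & B & \cdots & B\\ B^T & 0 & I & \cdots & I\\ B^T & I & 0 & \cdots & I\\ \vdots & \vdots & \vdots & \ddots & \vdots\\ B^T & I & I & \cdots & 0\end{bmatrix}$$ (one block of size $p$ followed by $n$ blocks of size $q$; the $q$-blocks are $0$ on the block diagonal and $I_q$ off it), and let $D$ be the $(np+q)\times(np+q)$ block matrix $$D=\begin{bmatrix} 0 & B^T & B^T & \cdots & B^T\\ B & 0 & I & \cdots & I\\ B & I & 0 & \cdots & I\\ \vdots & \vdots & \vdots & \ddots & \vdots\\ B & I & I & \cdots & 0\end{bmatrix}$$ (one block of size $q$ followed by $n$ blocks of size $p$; the $p$-blocks are $0$ on the block diagonal and $I_p$ off it). Then $C$ has $-1$ as an eigenvalue with multiplicity at least $(n-1)q$, and $D$ has $-1$ as an eigenvalue with multiplicity at least $(n-1)p$.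
   Context: $I$ denotes an identity matrix and $0$ a zero matrix of appropriate size. *)

theory Defs
  imports "Jordan_Normal_Form.Char_Poly"
begin

text \<open>For an a x b matrix M, blk_mat n M is the (a + n*b) x (a + n*b) block matrix
  with one leading block of size a (zero), followed by n blocks of size b. First block column: 0, M^T, ..., M^T.\<close>
definition blk_mat :: "nat \<Rightarrow> 'a::{zero,one} mat \<Rightarrow> 'a mat" where
  "blk_mat n M = (let a = dim_row M; b = dim_col M in
     mat (a + n * b) (a + n * b) (\<lambda>(i, j).
       if i < a then (if j < a then 0 else M $$ (i, (j - a) mod b))
       else if j < a then M $$ (j, (i - a) mod b)
       else if (i - a) div b = (j - a) div b then 0
       else if (i - a) mod b = (j - a) mod b then 1 else 0))"

end

theory Submission imports Defs begin

lemma det_rows_dvd: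
  fixes A :: "'a::comm_ring_1 mat"
  assumes A: "A \<in> carrier_mat N N" and S: "S \<subseteq> {0..<N}"
    and d: "\<And>i j. i \<in> S \<Longrightarrow> j < N \<Longrightarrow> f dvd A $$ (i,j)"
  shows "f ^ card S dvd det A"
proof -
  have "f ^ card S dvd signof p * (\<Prod> i = 0 ..< N. A $$ (i, p i))" if p: "p permutes {0..<N}" for p
  proof -
    have fin: "finite {0..<N}" by simp
    have "(\<Prod> i = 0 ..< N. A $$ (i, p i)) = (\<Prod> i \<in> S. A $$ (i, p i)) * (\<Prod> i \<in> {0..<N} - S. A $$ (i, p i))"
      using prod.subset_diff[OF S fin] by (simp add: mult.commute)
    moreover have "f ^ card S dvd (\<Prod> i \<in> S. A $$ (i, p i))"
    proof -
      have "f ^ card S = (\<Prod> i \<in> S. f)" by simp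
      also have "\<dots> dvd (\<Prod> i \<in> S. A $$ (i, p i))"
        by (rule prod_dvd_prod, rule d, auto, insert S p, auto simp: permutes_in_image)
      finally show ?thesis .
    qed
    ultimately show ?thesis by (simp add: dvd_mult2 dvd_mult)
  qed
  thus ?thesis using A unfolding det_def by (auto intro: dvd_sum)
qed

lemma divmod_eq_iff: "(x::nat) = y \<longleftrightarrow> x div b = y div b \<and> x mod b = y mod b"
  by (metis div_mult_mod_eq)

lemma blk_dvd:
  fixes M :: "'a::field mat"
  assumes M: "M \<in> carrier_mat a b"
  shows "[:1,1:] ^ ((n - 1) * b) dvd char_poly (blk_mat n M)"
proof -
  define N where "N = a + n * b"
  define C where "C = blk_mat n M"
  define A where "A = char_poly_matrix C"
  define S where "S = {a..<a + (n - 1) * b}"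
  define E :: "'a poly mat" where "E = mat N N (\<lambda>(i,k). (if k = i then 1 else 0) - (if i \<in> S \<and> k = i + b then 1 else 0))"
  have C: "C \<in> carrier_mat N N" using M unfolding C_def blk_mat_def N_def Let_def by auto
  have Cij: "C $$ (i,j) = (if i < a then (if j < a then 0 else M $$ (i, (j - a) mod b))
       else if j < a then M $$ (j, (i - a) mod b)
       else if (i - a) div b = (j - a) div b then 0
       else if (i - a) mod b = (j - a) mod b then 1 else 0)" if "i < N" "j < N" for i j
    using M that unfolding C_def blk_mat_def N_def Let_def by auto
  have A: "A \<in> carrier_mat N N" using C unfolding A_def by auto
  have Aij: "A $$ (i,j) = (if i = j then [:0,1:] else 0) + [: - C $$ (i,j) :]" if "i < N" "j < N" for i j
    using C that unfolding A_def char_poly_matrix_def by auto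
  have E: "E \<in> carrier_mat N N" unfolding E_def by auto
  have SN: "S \<subseteq> {0..<N}" 
  proof -
    have "(n - 1) * b \<le> n * b" by simp
    thus ?thesis unfolding S_def N_def by auto
  qed
  have detE: "det E = 1"
  proof -
    have ut: "upper_triangular E" unfolding upper_triangular_def E_def by auto
    have "diag_mat E = map (\<lambda>_. 1) [0..<N]"
      unfolding diag_mat_def E_def by (auto simp: S_def) (metis add.right_neutral gr0I leD mult_0_right)
    moreover have "prod_list (map (\<lambda>_. 1) [0..<m]) = (1::'a poly)" for m by (induct m) auto
    ultimately have "prod_list (diag_mat E) = 1" by simp
    thus ?thesis using det_upper_triangular[OF ut E] by simp
  qed
  have "det (E * A) = det A" using det_mult[OF E A] detE by simp
  moreover have "[:1,1:] ^ card S dvd det (E * A)"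
  proof (rule det_rows_dvd[OF _ SN])
    show "E * A \<in> carrier_mat N N" using E A by auto
    fix i j assume i: "i \<in> S" and j: "j < N"
    from i have ia: "a \<le> i" "i < a + (n - 1) * b" unfolding S_def by auto
    have n0: "n \<ge> 1" using ia by (cases n) auto
    have b0: "b > 0" using ia by (cases b) auto
    have nb: "(n - 1) * b + b = n * b" using n0 by (cases n) auto
    have iN: "i < N" "i + b < N" using ia nb unfolding N_def by auto
    have "(E * A) $$ (i,j) = (\<Sum>k = 0..<N. E $$ (i,k) * A $$ (k,j))"
      using E A iN j by (simp add: scalar_prod_def)
    also have "\<dots> = (\<Sum>k = 0..<N. (if k = i then A $$ (k,j) else 0) - (if k = i + b then A $$ (k,j) else 0))"
      by (rule sum.cong, auto simp: E_def iN i)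
    also have "\<dots> = A $$ (i,j) - A $$ (i + b, j)"
      using iN by (simp add: sum_subtractf)
    finally have EA: "(E * A) $$ (i,j) = A $$ (i,j) - A $$ (i + b, j)" .
    have d1: "(i + b - a) div b = Suc ((i - a) div b)" using ia b0
      by (metis Nat.add_diff_assoc2 div_add_self2 less_not_refl3 plus_1_eq_Suc add.commute)
    have m1: "(i + b - a) mod b = (i - a) mod b" using ia b0
      by (metis Nat.add_diff_assoc2 mod_add_self2)
    have jeq: "j = i \<longleftrightarrow> (j - a) div b = (i - a) div b \<and> (j - a) mod b = (i - a) mod b" if "j \<ge> a"
    proof -
      have "j = i \<longleftrightarrow> j - a = i - a" using that ia by auto
      thus ?thesis using divmod_eq_iff[of "j - a" "i - a" b] by simp
    qed
    have jeq2: "j = i + b \<longleftrightarrow> (j - a) div b = Suc ((i - a) div b) \<and> (j - a) mod b = (i - a) mod b" if "j \<ge> a"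
    proof -
      have "j = i + b \<longleftrightarrow> j - a = i + b - a" using that ia by auto
      thus ?thesis using divmod_eq_iff[of "j - a" "i + b - a" b] d1 m1 by simp
    qed
    have "[:1,1:] dvd A $$ (i,j) - A $$ (i + b, j)"
    proof (cases "j < a")
      case True
      thus ?thesis using ia iN j by (simp add: Aij Cij m1)
    next
      case False
      hence ja: "j \<ge> a" by simp
      have Ci: "C $$ (i,j) = (if (i - a) div b = (j - a) div b then 0
          else if (i - a) mod b = (j - a) mod b then 1 else 0)"
        using Cij[OF iN(1) j] ia ja by simp
      have Cib: "C $$ (i + b,j) = (if Suc ((i - a) div b) = (j - a) div b then 0
          else if (i - a) mod b = (j - a) mod b then 1 else 0)"
        using Cij[OF iN(2) j] ia ja d1 m1 by simp
      have Ai: "A $$ (i,j) = (if j = i then [:0,1:] else 0) + [: - C $$ (i,j) :]"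
        using Aij[OF iN(1) j] by auto
      have Aib: "A $$ (i + b,j) = (if j = i + b then [:0,1:] else 0) + [: - C $$ (i + b,j) :]"
        using Aij[OF iN(2) j] by auto
      have dn: "[:1,1:] dvd ([:-1,-1:] :: 'a poly)"
        by (rule dvdI[of _ _ "[:-1:]"]) simp
      note J1 = jeq[OF ja] and J2 = jeq2[OF ja]
      consider (a1) "(i - a) div b = (j - a) div b" | (a2) "Suc ((i - a) div b) = (j - a) div b"
        | (a3) "(i - a) div b \<noteq> (j - a) div b" "Suc ((i - a) div b) \<noteq> (j - a) div b" by blast
      thus ?thesis
      proof cases
        case a1
        hence "j \<noteq> i + b" using J2 by simp
        moreover have "j = i \<longleftrightarrow> (i - a) mod b = (j - a) mod b" using J1 a1 by auto
        ultimately show ?thesis using a1 unfolding Ai Aib Ci Cib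
          by (cases "(i - a) mod b = (j - a) mod b") (auto simp: one_pCons dn)
      next
        case a2
        hence "j \<noteq> i" using J1 by simp
        moreover have "j = i + b \<longleftrightarrow> (i - a) mod b = (j - a) mod b" using J2 a2 by auto
        ultimately show ?thesis using a2 unfolding Ai Aib Ci Cib
          by (cases "(i - a) mod b = (j - a) mod b") (auto simp: one_pCons dn)
      next
        case a3
        hence "j \<noteq> i" "j \<noteq> i + b" using J1 J2 by auto
        thus ?thesis using a3 unfolding Ai Aib Ci Cib by auto
      qed
    qed
    thus "[:1,1:] dvd (E * A) $$ (i,j)" using EA by simp
  qed
  ultimately show ?thesis unfolding S_def A_def C_def char_poly_def by simp
qed

lemma blk_order:
  fixes M :: "'a::field mat"
  assumes M: "M \<in> carrier_mat a b"
  shows "(n - 1) * b \<le> order (-1) (char_poly (blk_mat n M))"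
proof -
  have C: "blk_mat n M \<in> carrier_mat (a + n * b) (a + n * b)"
    using M unfolding blk_mat_def Let_def by auto
  from degree_monic_char_poly[OF C] have nz: "char_poly (blk_mat n M) \<noteq> 0" by auto
  have "[:- (-1), 1:] ^ ((n - 1) * b) dvd char_poly (blk_mat n M)"
    using blk_dvd[OF M, of n] by simp
  from order_max[OF this nz] show ?thesis .
qed

theorem lemma3p10:
  fixes p q n :: nat and B :: "real mat"
  assumes "q \<ge> 1" and "p \<ge> q" and "n \<ge> 1"
    and "B \<in> carrier_mat p q"
  shows "order (-1) (char_poly (blk_mat n B)) \<ge> (n - 1) * q \<and>
    order (-1) (char_poly (blk_mat n (transpose_mat B))) \<ge> (n - 1) * p"
proof
  show "order (-1) (char_poly (blk_mat n B)) \<ge> (n - 1) * q"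
    by (rule blk_order[OF assms(4)])
  have "transpose_mat B \<in> carrier_mat q p" using assms(4) by auto
  thus "order (-1) (char_poly (blk_mat n (transpose_mat B))) \<ge> (n - 1) * p"
    by (rule blk_order)
qed

end
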